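(* Let $S = \{s_1, s_2, \ldots\} \subset \mathbb{N}$, where $s_1, s_2, \ldots$ are distinct, satisfy $d^*(S) = 0$, and let $A$ be a finite alphabet. Then there exists a minimal subshift $X \subset A^{\mathbb{Z}}$ with zero topological entropy such that for every $u \in A^{\mathbb{N}}$ there is $x_u \in X$ with $x_u(s_n) = u(n)$ for all $n \in \mathbb{N}$.
   Context: For a finite set $A$, $A^{\mathbb{Z}}$ carries the product topology and the left shift $\sigma$, $(\sigma x)(n) = x(n+1)$. A subshift is a closed $\sigma$-invariant subset $X \subset A^{\mathbb{Z}}$ (with $\sigma$ restricted to it). It is minimal if for every $x \in X$ the orbit $\{\sigma^n x : n \in \mathbb{Z}\}$ is dense in $X$. For a subshift $X$, $L_n(X)$ denotes the set of words of length $n$ appearing as $x(i+1)\ldots x(i+n)$ for some $x \in X$, $i \in \mathbb{Z}$, and the topological entropy is $h(X,\sigma) = \lim_{n\to\infty} \frac{\ln |L_n(X)|}{n}$. The Banach density of $S \subset \mathbb{N}$ is $d^*(S) = \lim_{n \to \infty} \sup_{k \in \mathbb{N}} \frac{|S \cap \{k, \ldots, k+n-1\}|}{n}$. *)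

theory Defs
  imports "HOL-Analysis.Analysis"
begin

definition full_shift_top :: "(int \<Rightarrow> 'a) topology" where
  "full_shift_top = product_topology (\<lambda>_. discrete_topology UNIV) UNIV"

definition shift :: "(int \<Rightarrow> 'a) \<Rightarrow> (int \<Rightarrow> 'a)" where
  "shift x = (\<lambda>i. x (i + 1))"

definition shift_pow :: "int \<Rightarrow> (int \<Rightarrow> 'a) \<Rightarrow> (int \<Rightarrow> 'a)" where
  "shift_pow k x = (\<lambda>i. x (i + k))"

definition subshift :: "(int \<Rightarrow> 'a) set \<Rightarrow> bool" where
  "subshift X \<longleftrightarrow> closedin full_shift_top X \<and> shift ` X \<subseteq> X"

definition orbit :: "(int \<Rightarrow> 'a) \<Rightarrow> (int \<Rightarrow> 'a) set" where
  "orbit x = {shift_pow k x | k. True}"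

definition minimal_subshift :: "(int \<Rightarrow> 'a) set \<Rightarrow> bool" where
  "minimal_subshift X \<longleftrightarrow> subshift X \<and> X \<noteq> {} \<and>
     (\<forall>x\<in>X. full_shift_top closure_of (orbit x) = X)"

definition language :: "nat \<Rightarrow> (int \<Rightarrow> 'a) set \<Rightarrow> 'a list set" where
  "language n X = {map (\<lambda>j. x (i + 1 + int j)) [0..<n] | x i. x \<in> X}"

definition zero_entropy :: "(int \<Rightarrow> 'a) set \<Rightarrow> bool" where
  "zero_entropy X \<longleftrightarrow> ((\<lambda>n. ln (real (card (language n X))) / real n) \<longlongrightarrow> 0) sequentially"

definition banach_density_zero :: "nat set \<Rightarrow> bool" where
  "banach_density_zero S \<longleftrightarrow>
     ((\<lambda>n. SUP k\<in>UNIV. real (card (S \<inter> {k..<k+n})) / real n) \<longlongrightarrow> 0) sequentially"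

end

theory Submission imports Defs "HOL-Real_Asymp.Real_Asymp" begin

definition subw :: "'a list \<Rightarrow> 'a list \<Rightarrow> bool" where
  "subw w v \<longleftrightarrow> (\<exists>P Q. v = P @ w @ Q)"

lemma subw_trans: "subw a b \<Longrightarrow> subw b c \<Longrightarrow> subw a c"
  unfolding subw_def by (metis append.assoc)

lemma subw_refl: "subw a a"
  unfolding subw_def by (metis append.left_neutral append_Nil2)

lemma subw_concat: "z \<in> set ws \<Longrightarrow> subw z (concat ws)"
  unfolding subw_def by (metis concat.simps(2) concat_append split_list)

lemma length_concat_const: "(\<forall>z\<in>set ws. length z = l) \<Longrightarrow> length (concat ws) = length ws * l"
  by (induction ws) auto

definition win :: "(int \<Rightarrow> 'a) \<Rightarrow> int \<Rightarrow> nat \<Rightarrow> 'a list" where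
  "win x i n = map (\<lambda>j. x (i + int j)) [0..<n]"

definition n0of :: "(nat \<Rightarrow> nat) \<Rightarrow> real \<Rightarrow> nat" where
  "n0of s e = (SOME n0. \<forall>n\<ge>n0. \<forall>a. real (card (range s \<inter> {a..<a+n})) \<le> e * real n)"

definition Mof :: "nat \<Rightarrow> nat \<Rightarrow> nat" where "Mof k b = 2 * (k + 1) * (b + 1)"
definition rof :: "(nat \<Rightarrow> nat) \<Rightarrow> nat \<Rightarrow> nat \<Rightarrow> nat \<Rightarrow> nat" where
  "rof s k l b = n0of s (1 / (real (Mof k b) * real l)) + 3"
definition Nof :: "(nat \<Rightarrow> nat) \<Rightarrow> nat \<Rightarrow> nat \<Rightarrow> nat \<Rightarrow> nat" where
  "Nof s k l b = Mof k b * rof s k l b"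

definition enum :: "'a set \<Rightarrow> 'a list" where "enum B = (SOME xs. set xs = B \<and> distinct xs)"
definition fill :: "'a set \<Rightarrow> nat \<Rightarrow> 'a" where "fill B j = enum B ! (j mod length (enum B))"

lemma enum_props: "finite B \<Longrightarrow> set (enum B) = B \<and> distinct (enum B)"
  unfolding enum_def by (rule someI_ex) (simp add: finite_distinct_list)

lemma fill_in: "finite B \<Longrightarrow> B \<noteq> {} \<Longrightarrow> fill B j \<in> B"
proof -
  assume f: "finite B" and ne: "B \<noteq> {}"
  then have e: "set (enum B) = B" using enum_props by blast
  then have "length (enum B) > 0" using ne by auto
  then show ?thesis unfolding fill_def using e nth_mem by (metis mod_less_divisor)
qed

lemma fill_surj: "finite B \<Longrightarrow> v \<in> B \<Longrightarrow> \<exists>i<card B. \<forall>j. j mod card B = i \<longrightarrow> fill B j = v"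
proof -
  assume f: "finite B" and v: "v \<in> B"
  then have e: "set (enum B) = B" and d: "distinct (enum B)" using enum_props by blast+
  then have len: "length (enum B) = card B" by (metis distinct_card)
  from v e obtain i where i: "i < length (enum B)" "enum B ! i = v" by (metis in_set_conv_nth)
  show ?thesis using i len unfolding fill_def by auto
qed

definition stp :: "(nat \<Rightarrow> nat) \<Rightarrow> nat \<Rightarrow> nat \<Rightarrow> 'a list set \<Rightarrow> 'a list set" where
  "stp s k l B = {concat (map g [0..<Nof s k l (card B)]) | g. (\<forall>j<Nof s k l (card B). g j \<in> B) \<and>
      card {j. j < Nof s k l (card B) \<and> g j \<noteq> fill B j} \<le> rof s k l (card B)}"

primrec lev :: "(nat \<Rightarrow> nat) \<Rightarrow> nat \<Rightarrow> nat \<times> 'a list set" where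
  "lev s 0 = (1, {[c] | c. True})"
| "lev s (Suc k) = (Nof s k (fst (lev s k)) (card (snd (lev s k))) * fst (lev s k),
      stp s k (fst (lev s k)) (snd (lev s k)))"


lemma win_add: "win x a (m + n) = win x a m @ win x (a + int m) n"
  by (rule nth_equalityI) (auto simp: win_def nth_append algebra_simps)

lemma win_concat: "win x a (N * l) = concat (map (\<lambda>j. win x (a + int (j * l)) l) [0..<N])"
proof (induction N)
  case 0 then show ?case by (simp add: win_def)
next
  case (Suc N)
  have e: "Suc N * l = N * l + l" by simp
  have "win x a (Suc N * l) = win x a (N * l) @ win x (a + int (N * l)) l"
    by (simp only: e win_add)
  then show ?case using Suc by simp
qed

lemma win_length[simp]: "length (win x a n) = n" by (simp add: win_def)
lemma win_nth: "j < n \<Longrightarrow> win x a n ! j = x (a + int j)" by (simp add: win_def)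

lemma win_sub: assumes "a \<le> i" "i + int n \<le> a + int m"
  shows "subw (win x i n) (win x a m)"
proof -
  define p where "p = nat (i - a)"
  have m1: "m = p + (m - p)" and m2: "m - p = n + (m - p - n)" using assms unfolding p_def by linarith+
  have e1: "win x a m = win x a p @ win x (a + int p) (m - p)"
    using win_add[of x a p "m - p"] m1 by simp
  have e2: "win x (a + int p) (m - p) = win x (a + int p) n @ win x (a + int p + int n) (m - p - n)"
    using win_add[of x "a + int p" n "m - p - n"] m2 by simp
  have "win x a m = win x a p @ win x (a + int p) n @ win x (a + int p + int n) (m - p - n)"
    using e1 e2 by simp
  moreover have "a + int p = i" using assms unfolding p_def by simp
  ultimately show ?thesis unfolding subw_def by metis
qed


lemma drop_concat_const: "(\<forall>z\<in>set ws. length z = l) \<Longrightarrow> drop (q * l + t) (concat ws) = drop t (concat (drop q ws))"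
proof (induction ws arbitrary: q)
  case Nil then show ?case by simp
next
  case (Cons z zs)
  show ?case
  proof (cases q)
    case 0 then show ?thesis by simp
  next
    case (Suc q')
    have lz: "length z = l" using Cons.prems by simp
    have "drop (q * l + t) (concat (z # zs)) = drop (q' * l + t) (concat zs)"
      using lz by (simp add: Suc algebra_simps)
    also have "\<dots> = drop t (concat (drop q' zs))" using Cons by simp
    finally show ?thesis by (simp add: Suc)
  qed
qed

lemma take_concat_const:
  assumes "\<forall>z\<in>set V. length z = l" "t + n \<le> m * l"
  shows "take n (drop t (concat V)) = take n (drop t (concat (take m V)))"
proof (cases "length V \<le> m")
  case True then show ?thesis by simp
next
  case False
  have V: "concat V = concat (take m V) @ concat (drop m V)"
    by (metis append_take_drop_id concat_append)
  have "\<forall>z\<in>set (take m V). length z = l" using assms(1) by (meson in_set_takeD)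
  from length_concat_const[OF this] have "length (concat (take m V)) = m * l" using False by simp
  then show ?thesis unfolding V using assms(2) by (simp add: take_append)
qed

lemma concat_concat: "concat (map concat xss) = concat (concat xss)"
  by (induction xss) auto

lemma two_block:
  assumes len: "\<forall>z\<in>set ws. length z = l" and l: "l > 0" and sw: "subw w (concat ws)" and lw: "length w = 2 * l"
  shows "\<exists>z\<in>set ws. subw z w"
proof -
  from sw obtain P Q where PQ: "concat ws = P @ w @ Q" unfolding subw_def by blast
  define q where "q = length P div l"
  define t where "t = length P mod l"
  have p: "length P = q * l + t" unfolding q_def t_def by simp
  have tl: "t < l" using l unfolding t_def by simp
  have "length ws * l = length P + 2 * l + length Q" using PQ lw length_concat_const[OF len] by simp
  then have "length ws * l \<ge> (q + 2) * l" using p by simp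
  then have "length ws \<ge> q + 2" using l mult_le_cancel2[of "q + 2" l "length ws"] by blast
  then have L2: "length (drop q ws) \<ge> 2" by simp
  obtain z0 zs where D0: "drop q ws = z0 # zs" using L2 by (cases "drop q ws") auto
  obtain z1 rest where D1: "zs = z1 # rest" using L2 D0 by (cases zs) auto
  have D: "drop q ws = z0 # z1 # rest" using D0 D1 by simp
  have "set (drop q ws) \<subseteq> set ws" by (rule set_drop_subset)
  then have inz: "z0 \<in> set ws" "z1 \<in> set ws" using D by auto
  have l0: "length z0 = l" and l1: "length z1 = l" using inz len by auto
  have "w @ Q = drop (length P) (concat ws)" using PQ by simp
  also have "\<dots> = drop t (concat (drop q ws))" unfolding p by (rule drop_concat_const[OF len])
  also have "\<dots> = drop t z0 @ z1 @ concat rest" using D tl l0 by simp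
  finally have e: "w @ Q = drop t z0 @ z1 @ concat rest" .
  have "w = take (length w) (w @ Q)" by simp
  also have "\<dots> = take (2 * l) (drop t z0 @ z1 @ concat rest)" using e lw by simp
  also have "\<dots> = drop t z0 @ z1 @ take (2 * l - (l - t) - l) (concat rest)"
    using l0 l1 tl by (simp add: take_append)
  finally have "w = drop t z0 @ z1 @ take (2 * l - (l - t) - l) (concat rest)" .
  then have "subw z1 w" unfolding subw_def by blast
  then show ?thesis using inz by blast
qed


lemma topspace_fs[simp]: "topspace full_shift_top = UNIV"
  unfolding full_shift_top_def by (simp add: PiE_UNIV_domain)

lemma openin_fs_nbhd:
  assumes "openin full_shift_top T" "y \<in> T"
  shows "\<exists>F. finite F \<and> (\<forall>z. (\<forall>j\<in>F. z j = y j) \<longrightarrow> z \<in> T)"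
proof -
  from assms obtain U where U: "finite {i \<in> UNIV. U i \<noteq> topspace (discrete_topology UNIV)}"
    "y \<in> Pi\<^sub>E UNIV U" "Pi\<^sub>E UNIV U \<subseteq> T"
    unfolding full_shift_top_def openin_product_topology_alt by blast
  have "\<forall>z. (\<forall>j\<in>{i. U i \<noteq> UNIV}. z j = y j) \<longrightarrow> z \<in> T"
  proof (intro allI impI)
    fix z assume z: "\<forall>j\<in>{i. U i \<noteq> UNIV}. z j = y j"
    have "z \<in> Pi\<^sub>E UNIV U"
    proof -
      have "z j \<in> U j" for j
      proof (cases "U j = UNIV")
        case True then show ?thesis by simp
      next
        case False then have "z j = y j" using z by simp
        then show ?thesis using U(2) by (simp add: PiE_UNIV_domain Pi_iff)
      qed
      then show ?thesis by (simp add: PiE_UNIV_domain Pi_iff)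
    qed
    then show "z \<in> T" using U(3) by blast
  qed
  moreover have "finite {i. U i \<noteq> UNIV}" using U(1) by simp
  ultimately show ?thesis by blast
qed

lemma win_cong: "(\<And>j. i \<le> j \<Longrightarrow> j < i + int n \<Longrightarrow> z j = x j) \<Longrightarrow> win z i n = win x i n"
  unfolding win_def by (rule map_cong) auto

lemma win_shift: "win (shift_pow k x) i n = win x (i + k) n"
  unfolding win_def shift_pow_def by (simp add: algebra_simps)

lemma subw_shift:
  assumes "subw (win y a n) (win x b m)"
  shows "\<exists>p. \<forall>j<n. x (b + int p + int j) = y (a + int j)"
proof -
  from assms obtain P Q where PQ: "win x b m = P @ win y a n @ Q" unfolding subw_def by blast
  have "\<forall>j<n. x (b + int (length P) + int j) = y (a + int j)"
  proof (intro allI impI)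
    fix j assume j: "j < n"
    have lm: "length P + j < m" using PQ j by (metis length_append win_length add_less_cancel_left less_le_trans le_add1)
    have "win x b m ! (length P + j) = win y a n ! j" unfolding PQ using j by (simp add: nth_append)
    then show "x (b + int (length P) + int j) = y (a + int j)" using lm j by (simp add: win_nth add.assoc)
  qed
  then show ?thesis by blast
qed


lemma sum_pow_le: "(b::nat) \<ge> 1 \<Longrightarrow> (\<Sum>i\<le>m. b ^ i) \<le> (m + 1) * b ^ m"
proof -
  assume b: "b \<ge> 1"
  have "(\<Sum>i\<le>m. b ^ i) \<le> (\<Sum>i\<le>m. b ^ m)" by (rule sum_mono) (use b in \<open>simp add: power_increasing\<close>)
  also have "\<dots> = (m + 1) * b ^ m" by simp
  finally show ?thesis .
qed


lemma ln_prod3: "(l::real) > 0 \<Longrightarrow> c > 0 \<Longrightarrow> b > 0 \<Longrightarrow> ln (l * (c * b ^ m)) = ln l + ln c + real m * ln b"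
  by (simp add: ln_mult ln_realpow)

locale cstr =
  fixes s :: "nat \<Rightarrow> nat" and c0 :: "'a::finite"
  assumes inj: "inj s" and bd: "banach_density_zero (range s)"
begin

definition ell :: "nat \<Rightarrow> nat" where "ell k = fst (lev s k :: nat \<times> 'a list set)"
definition B :: "nat \<Rightarrow> 'a list set" where "B k = snd (lev s k)"
definition NN :: "nat \<Rightarrow> nat" where "NN k = Nof s k (ell k) (card (B k))"
definition rr :: "nat \<Rightarrow> nat" where "rr k = rof s k (ell k) (card (B k))"
definition fil :: "nat \<Rightarrow> nat \<Rightarrow> 'a list" where "fil k j = fill (B k) j"

lemma ell_0: "ell 0 = 1" by (simp add: ell_def)
lemma B_0: "B 0 = {[c] | c. True}" by (simp add: B_def)
lemma ell_Suc: "ell (Suc k) = NN k * ell k" by (simp add: ell_def NN_def B_def)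
lemma B_Suc: "B (Suc k) = {concat (map g [0..<NN k]) | g. (\<forall>j<NN k. g j \<in> B k) \<and>
      card {j. j < NN k \<and> g j \<noteq> fil k j} \<le> rr k}"
  by (simp add: ell_def NN_def B_def rr_def fil_def stp_def)

lemma n0of: assumes "e > 0"
  shows "\<forall>n\<ge>n0of s e. \<forall>a. real (card (range s \<inter> {a..<a+n})) \<le> e * real n"
proof -
  let ?f = "\<lambda>n. SUP k\<in>UNIV. real (card (range s \<inter> {k..<k+n})) / real n"
  have "(?f \<longlongrightarrow> 0) sequentially" using bd unfolding banach_density_zero_def .
  then have "eventually (\<lambda>n. dist (?f n) 0 < e) sequentially" using assms tendstoD by blast
  then obtain n1 where n1: "\<And>n. n \<ge> n1 \<Longrightarrow> dist (?f n) 0 < e" by (auto simp: eventually_sequentially)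
  have "\<forall>n\<ge>n1. \<forall>a. real (card (range s \<inter> {a..<a+n})) \<le> e * real n"
  proof (intro allI impI)
    fix n a assume n: "n \<ge> n1"
    have cle: "card (range s \<inter> {k..<k+n}) \<le> n" for k
    proof -
      have "card (range s \<inter> {k..<k+n}) \<le> card {k..<k+n}" by (rule card_mono) auto
      then show ?thesis by simp
    qed
    show "real (card (range s \<inter> {a..<a+n})) \<le> e * real n"
    proof (cases "n = 0")
      case True then show ?thesis by simp
    next
      case False
      have bdd: "bdd_above (range (\<lambda>k. real (card (range s \<inter> {k..<k+n})) / real n))"
        using cle False by (intro bdd_aboveI[where M=1]) (auto simp: divide_le_eq_1)
      have "real (card (range s \<inter> {a..<a+n})) / real n \<le> ?f n"
        by (rule cSUP_upper[OF _ bdd]) simp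
      also have "\<dots> < e" using n1[OF n] by (simp add: dist_real_def abs_less_iff)
      finally have lt: "real (card (range s \<inter> {a..<a+n})) / real n < e" .
      have np: "real n > 0" using False by simp
      show ?thesis using lt unfolding pos_divide_less_eq[OF np] by simp
    qed
  qed
  then show ?thesis unfolding n0of_def by (rule someI)
qed

lemma NN_eq: "NN k = Mof k (card (B k)) * rr k" by (simp add: NN_def rr_def Nof_def)
lemma rr_ge: "rr k \<ge> 3" by (simp add: rr_def rof_def)
lemma NN_ge: "NN k \<ge> 6"
proof -
  have "Mof k (card (B k)) \<ge> 2" by (simp add: Mof_def)
  then have "2 * 3 \<le> Mof k (card (B k)) * rr k" using rr_ge[of k] by (intro mult_le_mono) auto
  then show ?thesis using NN_eq[of k] by simp
qed
lemma NN_fill: "(rr k + 1) * card (B k) \<le> NN k"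
proof -
  have "(rr k + 1) * card (B k) \<le> (2 * rr k) * (card (B k) + 1)" using rr_ge[of k] by (intro mult_le_mono) auto
  also have "\<dots> \<le> NN k" unfolding NN_eq Mof_def by simp
  finally show ?thesis .
qed
lemma NN_r: "rr k * (k + 1) \<le> NN k"
proof -
  have "k + 1 \<le> Mof k (card (B k))" by (simp add: Mof_def)
  then have "rr k * (k + 1) \<le> rr k * Mof k (card (B k))" by (rule mult_le_mono2)
  then show ?thesis unfolding NN_eq by (simp add: mult.commute)
qed

lemma dens: assumes "ell k \<ge> 1"
  shows "card (range s \<inter> {a..<a + NN k * ell k}) \<le> rr k"
proof -
  define M where "M = Mof k (card (B k))"
  define e where "e = 1 / (real M * real (ell k))"
  have M: "M \<ge> 2" by (simp add: M_def Mof_def)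
  have e: "e > 0" using M assms by (simp add: e_def)
  have one: "(real M * real (ell k)) * e = 1" unfolding e_def using M assms by simp
  have r: "rr k = n0of s e + 3" unfolding rr_def rof_def e_def M_def by (rule refl)
  have N: "NN k = M * rr k" unfolding M_def by (rule NN_eq)
  have "NN k * ell k \<ge> n0of s e" using N r M assms
  proof -
    have "n0of s e \<le> rr k" using r by simp
    also have "\<dots> \<le> M * rr k" using M by simp
    also have "\<dots> \<le> M * rr k * ell k" using assms by simp
    finally show ?thesis using N by simp
  qed
  then have "real (card (range s \<inter> {a..<a + NN k * ell k})) \<le> e * real (NN k * ell k)"
    by (rule n0of[OF e, rule_format])
  also have "\<dots> = ((real M * real (ell k)) * e) * real (rr k)" unfolding N by (simp add: algebra_simps)
  also have "\<dots> = real (rr k)" using one by simp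
  finally have "real (card (range s \<inter> {a..<a + NN k * ell k})) \<le> real (rr k)" .
  then show ?thesis by simp
qed

lemma B_props: "ell k \<ge> 1 \<and> finite (B k) \<and> B k \<noteq> {} \<and> (\<forall>w\<in>B k. length w = ell k)"
proof (induction k)
  case 0
  have "finite (B 0)"
    by (rule finite_subset[of _ "{xs. set xs \<subseteq> UNIV \<and> length xs = 1}"]) (use finite_lists_length_eq[of "UNIV::'a set" 1] in \<open>auto simp: B_0\<close>)
  then show ?case by (auto simp: ell_0 B_0)
next
  case (Suc k)
  then have IH: "ell k \<ge> 1" "finite (B k)" "B k \<noteq> {}" "\<And>w. w \<in> B k \<Longrightarrow> length w = ell k" by auto
  have len: "\<forall>w\<in>B (Suc k). length w = ell (Suc k)"
  proof
    fix w assume "w \<in> B (Suc k)"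
    then obtain g where w: "w = concat (map g [0..<NN k])" and g: "\<forall>j<NN k. g j \<in> B k"
      unfolding B_Suc by blast
    have "\<forall>z\<in>set (map g [0..<NN k]). length z = ell k" using g IH(4) by auto
    from length_concat_const[OF this] show "length w = ell (Suc k)" unfolding w ell_Suc by simp
  qed
  have fin: "finite (B (Suc k))"
    by (rule finite_subset[of _ "{xs. set xs \<subseteq> UNIV \<and> length xs = ell (Suc k)}"]) (use len finite_lists_length_eq[of "UNIV::'a set" "ell (Suc k)"] in auto)
  have "concat (map (fil k) [0..<NN k]) \<in> B (Suc k)"
    unfolding B_Suc using fill_in[OF IH(2,3)] by (auto simp: fil_def)
  then have ne: "B (Suc k) \<noteq> {}" by auto
  have "ell (Suc k) \<ge> 1" using IH(1) NN_ge[of k] unfolding ell_Suc by simp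
  then show ?case using len fin ne by blast
qed

lemma ell_ge1: "ell k \<ge> 1" using B_props[of k] by (rule conjunct1)
lemma B_fin: "finite (B k)" using B_props[of k] by simp
lemma B_ne: "B k \<noteq> {}" using B_props[of k] by simp
lemma B_len: "w \<in> B k \<Longrightarrow> length w = ell k" using B_props[of k] by simp
lemma fil_in: "fil k j \<in> B k" unfolding fil_def by (rule fill_in[OF B_fin B_ne])
lemma dens': "card (range s \<inter> {a..<a + ell (Suc k)}) \<le> rr k" unfolding ell_Suc by (rule dens[OF ell_ge1])


definition cc :: "nat \<Rightarrow> nat" where "cc k = (\<Sum>i<k. ell i)"
definition pos :: "nat \<Rightarrow> int \<Rightarrow> nat" where "pos k i = nat ((i + int (cc k)) mod int (ell k))"
definition st :: "nat \<Rightarrow> int \<Rightarrow> int" where "st k i = i - int (pos k i)"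
definition touched :: "nat \<Rightarrow> int \<Rightarrow> bool" where
  "touched k a \<longleftrightarrow> (\<exists>n. a \<le> int (s n) \<and> int (s n) < a + int (ell k))"
definition TT :: "nat \<Rightarrow> int \<Rightarrow> bool" where "TT k i = touched k (st k i)"
definition xu :: "(nat \<Rightarrow> 'a) \<Rightarrow> int \<Rightarrow> 'a" where
  "xu u i = (if i \<in> range (\<lambda>n. int (s n)) then u (inv s (nat i))
     else (let k = (LEAST k. TT (Suc k) i) in fil k (pos (Suc k) i div ell k) ! pos k i))"

lemma cc_Suc: "cc (Suc k) = cc k + ell k" by (simp add: cc_def)
lemma ell_dvd: "ell k dvd ell (Suc k)" by (simp add: ell_Suc)
lemma pos_int: "int (pos k i) = (i + int (cc k)) mod int (ell k)"
  using ell_ge1[of k] by (simp add: pos_def)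
lemma pos_lt: "pos k i < ell k"
  using ell_ge1[of k] by (simp add: pos_def nat_less_iff)

lemma pos_Suc_mod: "pos k i = pos (Suc k) i mod ell k"
proof -
  have d: "int (ell k) dvd int (ell (Suc k))" using ell_dvd by simp
  have "int (pos (Suc k) i mod ell k) = ((i + int (cc (Suc k))) mod int (ell (Suc k))) mod int (ell k)"
    by (simp add: pos_int zmod_int)
  also have "\<dots> = (i + int (cc (Suc k))) mod int (ell k)" using d by (simp add: mod_mod_cancel)
  also have "\<dots> = (i + int (cc k) + int (ell k)) mod int (ell k)" by (simp add: cc_Suc algebra_simps)
  also have "\<dots> = int (pos k i)" by (simp add: pos_int)
  finally show ?thesis by simp
qed

lemma st_Suc: "st k i = st (Suc k) i + int (pos (Suc k) i div ell k * ell k)"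
proof -
  have "pos (Suc k) i = pos (Suc k) i div ell k * ell k + pos k i"
    using pos_Suc_mod[of k i] by simp
  then have "int (pos (Suc k) i) = int (pos (Suc k) i div ell k * ell k) + int (pos k i)"
    by (metis of_nat_add)
  then show ?thesis unfolding st_def by linarith
qed

lemma st_nest: "st (Suc k) i \<le> st k i \<and> st k i + int (ell k) \<le> st (Suc k) i + int (ell (Suc k))"
proof -
  have q: "pos (Suc k) i div ell k < NN k"
    using pos_lt[of "Suc k" i] ell_ge1[of k] unfolding ell_Suc by (simp add: div_less_iff_less_mult)
  then have "(pos (Suc k) i div ell k + 1) * ell k \<le> NN k * ell k"
    by (intro mult_le_mono1) simp
  then have A: "int (pos (Suc k) i div ell k * ell k) + int (ell k) \<le> int (NN k * ell k)"
    by (metis add.commute mult_Suc Suc_eq_plus1 of_nat_add of_nat_le_iff)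
  show ?thesis using A st_Suc[of k i] unfolding ell_Suc by linarith
qed

lemma TT_Suc: assumes "TT k i" shows "TT (Suc k) i"
proof -
  from assms obtain n where n: "st k i \<le> int (s n)" "int (s n) < st k i + int (ell k)"
    unfolding TT_def touched_def by auto
  show ?thesis unfolding TT_def touched_def
    using st_nest[of k i] n by (intro exI[of _ n]) linarith
qed

lemma TT_add: "TT k i \<Longrightarrow> TT (k + d) i"
  by (induction d) (auto intro: TT_Suc)

lemma TT_mono: "TT k i \<Longrightarrow> k \<le> k' \<Longrightarrow> TT k' i"
  using TT_add[of k i "k' - k"] by simp

lemma aligned: assumes "(a + int (cc k)) mod int (ell k) = 0" "a \<le> i" "i < a + int (ell k)"
  shows "st k i = a" "pos k i = nat (i - a)"
proof -
  have "(i + int (cc k)) mod int (ell k) = ((i - a) + (a + int (cc k))) mod int (ell k)" by simp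
  also have "\<dots> = (i - a) mod int (ell k)" using assms(1) by (metis add.right_neutral mod_add_right_eq)
  also have "\<dots> = i - a" using assms by simp
  finally have "int (pos k i) = i - a" by (simp add: pos_int)
  then show "st k i = a" "pos k i = nat (i - a)" unfolding st_def by auto
qed

lemma aligned_sub: assumes "(a + int (cc (Suc k))) mod int (ell (Suc k)) = 0"
  shows "(a + int (j * ell k) + int (cc k)) mod int (ell k) = 0"
proof -
  have "int (ell k) dvd int (ell (Suc k))" using ell_dvd by simp
  then have "int (ell k) dvd a + int (cc (Suc k))" using assms by (meson dvd_trans mod_0_imp_dvd)
  then have "int (ell k) dvd (a + int (cc k)) + int (ell k)" by (simp add: cc_Suc algebra_simps)
  then have "int (ell k) dvd a + int (cc k)" by (simp add: dvd_add_left_iff)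
  then have "int (ell k) dvd (a + int (cc k)) + int (ell k) * int j" by (simp add: dvd_add)
  moreover have "a + int (j * ell k) + int (cc k) = (a + int (cc k)) + int (ell k) * int j" by (simp add: algebra_simps)
  ultimately show ?thesis by (metis dvd_imp_mod_0)
qed

lemma main_block:
  "(a + int (cc k)) mod int (ell k) = 0 \<Longrightarrow> touched k a \<Longrightarrow> win (xu u) a (ell k) \<in> B k"
proof (induction k arbitrary: a)
  case 0
  then obtain n where "a = int (s n)" unfolding touched_def by (auto simp: ell_0)
  then show ?case by (simp add: win_def ell_0 B_0)
next
  case (Suc k)
  let ?l = "ell k" and ?N = "NN k"
  define g where "g j = win (xu u) (a + int (j * ?l)) ?l" for j
  have w: "win (xu u) a (ell (Suc k)) = concat (map g [0..<?N])"
    unfolding ell_Suc g_def by (rule win_concat)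
  have al: "(a + int (j * ?l) + int (cc k)) mod int ?l = 0" for j
    using aligned_sub[OF Suc.prems(1)] .
  have untouched: "g j = fil k j" if j: "j < ?N" and nt: "\<not> touched k (a + int (j * ?l))" for j
  proof (rule nth_equalityI)
    show "length (g j) = length (fil k j)" using B_len[OF fil_in[of k j]] by (simp add: g_def)
    fix t assume "t < length (g j)"
    then have t: "t < ?l" by (simp add: g_def)
    define i where "i = a + int (j * ?l) + int t"
    have jl: "j * ?l + t < ?N * ?l"
    proof -
      have "(j + 1) * ?l \<le> ?N * ?l" using j by (intro mult_le_mono1) simp
      then show ?thesis using t by simp
    qed
    have ni: "i \<notin> range (\<lambda>n. int (s n))"
    proof
      assume "i \<in> range (\<lambda>n. int (s n))"
      then obtain n where "i = int (s n)" by auto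
      then have "touched k (a + int (j * ?l))" unfolding touched_def i_def using t by (intro exI[of _ n]) auto
      then show False using nt by simp
    qed
    have ia: "i - a = int (j * ?l + t)" unfolding i_def by simp
    have ii: "a \<le> i" "i < a + int (ell (Suc k))" using ia jl unfolding ell_Suc by linarith+
    have sS: "st (Suc k) i = a" using aligned(1)[OF Suc.prems(1) ii] .
    have pS: "pos (Suc k) i = j * ?l + t"
      using aligned(2)[OF Suc.prems(1) ii] by (simp only: ia nat_int)
    have ii2: "a + int (j * ?l) \<le> i" "i < a + int (j * ?l) + int ?l" using t unfolding i_def by linarith+
    have sk: "st k i = a + int (j * ?l)" and pk: "pos k i = t"
      using aligned[OF al[of j] ii2] unfolding i_def by auto
    have Tk: "TT (Suc k) i" unfolding TT_def sS using Suc.prems(2) .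
    have nT: "\<not> TT (Suc k') i" if "k' < k" for k'
    proof
      assume "TT (Suc k') i"
      then have "TT k i" using TT_mono that by (meson Suc_leI)
      then show False using nt unfolding TT_def sk by simp
    qed
    have le: "(LEAST k. TT (Suc k) i) = k"
      by (rule Least_equality) (use Tk nT in \<open>auto simp: not_less[symmetric]\<close>)
    have "pos (Suc k) i div ?l = j" using t unfolding pS by simp
    then have "xu u i = fil k j ! t" unfolding xu_def using ni le pk by (simp add: Let_def)
    then show "g j ! t = fil k j ! t" unfolding g_def i_def using t by (simp add: win_nth)
  qed
  have gB: "\<forall>j<?N. g j \<in> B k"
  proof (intro allI impI)
    fix j assume j: "j < ?N"
    show "g j \<in> B k"
    proof (cases "touched k (a + int (j * ?l))")
      case True then show ?thesis unfolding g_def using Suc.IH[OF al True] by simp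
    next
      case False then show ?thesis using untouched[OF j] fil_in by simp
    qed
  qed
  define f where "f p = nat ((int p - a) div int ?l)" for p
  have sub: "{j. j < ?N \<and> g j \<noteq> fil k j} \<subseteq> f ` (range s \<inter> {nat a..<nat a + ell (Suc k)})"
  proof
    fix j assume "j \<in> {j. j < ?N \<and> g j \<noteq> fil k j}"
    then have j: "j < ?N" and tj: "touched k (a + int (j * ?l))" using untouched by auto
    then obtain n where n: "a + int (j * ?l) \<le> int (s n)" "int (s n) < a + int (j * ?l) + int ?l"
      unfolding touched_def by auto
    have "(j + 1) * ?l \<le> ?N * ?l" using j by (intro mult_le_mono1) simp
    then have "int ((j + 1) * ?l) \<le> int (?N * ?l)" by (simp only: of_nat_le_iff)
    moreover have "int ((j + 1) * ?l) = int (j * ?l) + int ?l" by simp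
    ultimately have up: "int (s n) < a + int (ell (Suc k))" using n(2) unfolding ell_Suc by linarith
    have a1: "a \<le> int (s n)" using n(1) of_nat_0_le_iff[of "j * ?l"] by linarith
    have lo: "nat a \<le> s n" using a1 by (simp add: nat_le_iff)
    have "int (s n) < int (nat a) + int (ell (Suc k))" using up by linarith
    then have hi: "s n < nat a + ell (Suc k)" by linarith
    have "s n \<in> range s \<inter> {nat a..<nat a + ell (Suc k)}" using lo hi by auto
    moreover have "f (s n) = j"
    proof -
      define r where "r = int (s n) - a - int (j * ?l)"
      have r: "0 \<le> r" "r < int ?l" using n unfolding r_def by auto
      have "int (s n) - a = int j * int ?l + r" unfolding r_def by simp
      then have "(int (s n) - a) div int ?l = int j" using r by simp
      then show ?thesis unfolding f_def by simp
    qed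
    ultimately show "j \<in> f ` (range s \<inter> {nat a..<nat a + ell (Suc k)})" by force
  qed
  have "card {j. j < ?N \<and> g j \<noteq> fil k j} \<le> card (f ` (range s \<inter> {nat a..<nat a + ell (Suc k)}))"
    by (rule card_mono[OF _ sub]) simp
  also have "\<dots> \<le> card (range s \<inter> {nat a..<nat a + ell (Suc k)})" by (rule card_image_le) simp
  also have "\<dots> \<le> rr k" by (rule dens')
  finally have "card {j. j < ?N \<and> g j \<noteq> fil k j} \<le> rr k" .
  then show ?case unfolding w B_Suc using gB by blast
qed


definition LL :: "'a list set" where "LL = {w. \<exists>K. \<exists>v\<in>B K. subw w v}"
definition XX :: "(int \<Rightarrow> 'a) set" where "XX = {x. \<forall>i n. win x i n \<in> LL}"

lemma cc_ge: "k \<le> cc k"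
proof (induction k)
  case 0 then show ?case by (simp add: cc_def)
next
  case (Suc k) then show ?case using ell_ge1[of k] by (simp add: cc_Suc)
qed

lemma cc_le: "2 * cc k \<le> ell k"
proof (induction k)
  case 0 then show ?case by (simp add: cc_def ell_0)
next
  case (Suc k)
  have "6 * ell k \<le> NN k * ell k" using NN_ge[of k] by (rule mult_le_mono1)
  moreover have "2 * cc (Suc k) = 2 * cc k + 2 * ell k" by (simp add: cc_Suc)
  ultimately show ?case using Suc unfolding ell_Suc by linarith
qed

lemma ell_ge: "k + 1 \<le> ell k"
proof (induction k)
  case 0 then show ?case by (simp add: ell_0)
next
  case (Suc k)
  have "6 * ell k \<le> NN k * ell k" using NN_ge[of k] by (rule mult_le_mono1)
  then show ?case using Suc ell_ge1[of k] unfolding ell_Suc by linarith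
qed

lemma xu_val: "xu u (int (s n)) = u n"
  unfolding xu_def using inj by (simp add: inv_f_f)

lemma xu_in: "xu u \<in> XX"
  unfolding XX_def
proof (intro CollectI allI)
  fix i n
  define K where "K = 2 * (nat \<bar>i\<bar> + n + s 0 + 1)"
  define a where "a = - int (cc K)"
  have c1: "K \<le> cc K" by (rule cc_ge)
  have c2: "2 * cc K \<le> ell K" by (rule cc_le)
  have c3: "K + 1 \<le> ell K" by (rule ell_ge)
  have Ki: "int K = 2 * (\<bar>i\<bar> + int n + int (s 0) + 1)" unfolding K_def by simp
  have d1: "int K \<le> int (cc K)" using c1 by simp
  have d2: "2 * int (cc K) \<le> int (ell K)" using c2 by linarith
  have d3: "int K + 1 \<le> int (ell K)" using c3 by linarith
  have ab: "i \<le> \<bar>i\<bar>" "- i \<le> \<bar>i\<bar>" "0 \<le> int n" "0 \<le> int (s 0)" by auto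
  have ai: "a \<le> i" unfolding a_def using Ki d1 ab by (smt (verit))
  have ia: "i + int n \<le> a + int (ell K)" unfolding a_def using Ki d1 d2 d3 ab by (smt (verit))
  have s0: "int (s 0) < a + int (ell K)" unfolding a_def using Ki d1 d2 d3 ab by (smt (verit))
  have al: "(a + int (cc K)) mod int (ell K) = 0" unfolding a_def by simp
  have to: "touched K a" unfolding touched_def using s0 by (intro exI[of _ 0]) (simp add: a_def)
  have "win (xu u) a (ell K) \<in> B K" by (rule main_block[OF al to])
  moreover have "subw (win (xu u) i n) (win (xu u) a (ell K))" by (rule win_sub[OF ai ia])
  ultimately show "win (xu u) i n \<in> LL" unfolding LL_def by blast
qed

lemma B_sub_next: assumes v: "v \<in> B k" and w: "w \<in> B (Suc k)" shows "subw v w"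
proof -
  from w obtain g where w: "w = concat (map g [0..<NN k])" and g: "\<forall>j<NN k. g j \<in> B k"
    and D: "card {j. j < NN k \<and> g j \<noteq> fil k j} \<le> rr k" unfolding B_Suc by blast
  let ?b = "card (B k)"
  obtain i where i: "i < ?b" and iv: "\<And>j. j mod ?b = i \<Longrightarrow> fil k j = v"
    using fill_surj[OF B_fin v] unfolding fil_def by blast
  have bpos: "?b > 0" using i by simp
  define J where "J = (\<lambda>t. i + t * ?b) ` {..rr k}"
  have injJ: "inj_on (\<lambda>t. i + t * ?b) {..rr k}" using bpos by (intro inj_onI) simp
  have cJ: "card J = rr k + 1" unfolding J_def using card_image[OF injJ] by simp
  have JN: "j < NN k" if "j \<in> J" for j
  proof -
    from that obtain t where t: "t \<le> rr k" "j = i + t * ?b" unfolding J_def by blast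
    have tb: "t * ?b \<le> rr k * ?b" using t(1) by (rule mult_le_mono1)
    have "(rr k + 1) * ?b = rr k * ?b + ?b" by simp
    then have "j < (rr k + 1) * ?b" using tb t(2) i by linarith
    then show ?thesis using NN_fill[of k] by linarith
  qed
  have Jmod: "j mod ?b = i" if "j \<in> J" for j
    using that i unfolding J_def by auto
  have "\<not> J \<subseteq> {j. j < NN k \<and> g j \<noteq> fil k j}"
  proof
    assume "J \<subseteq> {j. j < NN k \<and> g j \<noteq> fil k j}"
    then have "card J \<le> card {j. j < NN k \<and> g j \<noteq> fil k j}" by (rule card_mono[rotated]) simp
    then show False using cJ D by simp
  qed
  then obtain j where j: "j \<in> J" "\<not> (j < NN k \<and> g j \<noteq> fil k j)" by blast
  then have jN: "j < NN k" and gj: "g j = v" using JN iv Jmod by auto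
  have "g j \<in> set (map g [0..<NN k])" using jN by simp
  then show ?thesis unfolding w gj[symmetric] by (rule subw_concat)
qed

lemma B_concat_add: "v \<in> B (k + d) \<Longrightarrow> \<exists>ws. set ws \<subseteq> B k \<and> v = concat ws"
proof (induction d arbitrary: v)
  case 0 then show ?case by (intro exI[of _ "[v]"]) simp
next
  case (Suc d)
  from Suc.prems obtain g where v: "v = concat (map g [0..<NN (k + d)])" and g: "\<forall>j<NN (k + d). g j \<in> B (k + d)"
    unfolding add_Suc_right B_Suc by blast
  have "\<forall>j\<in>{..<NN (k + d)}. \<exists>ws. set ws \<subseteq> B k \<and> g j = concat ws" using g Suc.IH by blast
  then obtain W where W: "\<And>j. j < NN (k + d) \<Longrightarrow> set (W j) \<subseteq> B k \<and> g j = concat (W j)"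
    by (metis lessThan_iff)
  have m: "map g [0..<NN (k + d)] = map concat (map W [0..<NN (k + d)])" using W by simp
  have "v = concat (concat (map W [0..<NN (k + d)]))" by (simp only: v m concat_concat)
  moreover have "set (concat (map W [0..<NN (k + d)])) \<subseteq> B k" using W by fastforce
  ultimately show ?case by blast
qed

lemma B_concat: "k \<le> K \<Longrightarrow> v \<in> B K \<Longrightarrow> \<exists>ws. set ws \<subseteq> B k \<and> v = concat ws"
  using B_concat_add[of v k "K - k"] by simp

lemma B_up_add: "v \<in> B K \<Longrightarrow> \<exists>v'\<in>B (K + d). subw v v'"
proof (induction d)
  case 0 then show ?case using subw_refl by auto
next
  case (Suc d)
  then obtain v' where v': "v' \<in> B (K + d)" "subw v v'" by blast
  obtain w where w: "w \<in> B (Suc (K + d))" using B_ne by blast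
  have "subw v' w" by (rule B_sub_next[OF v'(1) w])
  then show ?case using v' w subw_trans by auto
qed

lemma LL_up: "w \<in> LL \<Longrightarrow> \<exists>K\<ge>k. \<exists>v\<in>B K. subw w v"
proof -
  assume "w \<in> LL"
  then obtain K v where v: "v \<in> B K" "subw w v" unfolding LL_def by blast
  obtain v' where v': "v' \<in> B (K + k)" "subw v v'" using B_up_add[OF v(1)] by blast
  show ?thesis using v' v(2) subw_trans by (intro exI[of _ "K + k"]) auto
qed


lemma XX_shift_pow: "x \<in> XX \<Longrightarrow> shift_pow k x \<in> XX"
  unfolding XX_def by (simp add: win_shift)

lemma XX_closed: "closedin full_shift_top XX"
proof -
  have "openin full_shift_top (UNIV - XX)"
    unfolding full_shift_top_def openin_product_topology_alt
  proof
    fix x assume "x \<in> UNIV - XX"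
    then obtain i n where bad: "win x i n \<notin> LL" unfolding XX_def by blast
    define U where "U j = (if i \<le> j \<and> j < i + int n then {x j} else UNIV)" for j
    have f: "finite {j \<in> UNIV. U j \<noteq> topspace (discrete_topology UNIV)}"
      by (rule finite_subset[of _ "{i..<i + int n}"]) (auto simp: U_def)
    have xin: "x \<in> Pi\<^sub>E UNIV U" by (simp add: PiE_UNIV_domain U_def)
    have sub: "Pi\<^sub>E UNIV U \<subseteq> UNIV - XX"
    proof
      fix z assume "z \<in> Pi\<^sub>E UNIV U"
      then have "\<And>j. i \<le> j \<Longrightarrow> j < i + int n \<Longrightarrow> z j = x j"
        by (auto simp: PiE_UNIV_domain U_def Pi_iff split: if_splits)
      then have "win z i n = win x i n" by (rule win_cong)
      then have "win z i n \<notin> LL" using bad by simp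
      then show "z \<in> UNIV - XX" unfolding XX_def by blast
    qed
    show "\<exists>U. finite {j \<in> UNIV. U j \<noteq> topspace (discrete_topology UNIV)} \<and>
          (\<forall>j\<in>UNIV. openin (discrete_topology UNIV) (U j)) \<and> x \<in> Pi\<^sub>E UNIV U \<and> Pi\<^sub>E UNIV U \<subseteq> UNIV - XX"
      using f xin sub by auto
  qed
  then show ?thesis unfolding closedin_def by simp
qed

lemma XX_ne: "XX \<noteq> {}" using xu_in by blast

lemma XX_subshift: "subshift XX"
proof -
  have "shift ` XX \<subseteq> XX"
  proof
    fix y assume "y \<in> shift ` XX"
    then obtain x where x: "x \<in> XX" "y = shift x" by blast
    have "shift x = shift_pow 1 x" unfolding shift_def shift_pow_def by simp
    then show "y \<in> XX" using XX_shift_pow[OF x(1)] x(2) by simp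
  qed
  then show ?thesis unfolding subshift_def using XX_closed by blast
qed

lemma XX_windows:
  assumes x: "x \<in> XX" and y: "y \<in> XX"
  shows "\<exists>p. \<forall>j<2 * m. x (int p + int j) = y (- int m + int j)"
proof -
  have "win y (- int m) (2 * m) \<in> LL" using y unfolding XX_def by blast
  then obtain K v where v: "v \<in> B K" "subw (win y (- int m) (2 * m)) v" unfolding LL_def by blast
  have "win x 0 (2 * ell (Suc K)) \<in> LL" using x unfolding XX_def by blast
  then obtain K' v' where v': "K' \<ge> Suc K" "v' \<in> B K'" "subw (win x 0 (2 * ell (Suc K))) v'"
    using LL_up by blast
  obtain ws where ws: "set ws \<subseteq> B (Suc K)" "v' = concat ws" using B_concat[OF v'(1,2)] by blast
  have "\<exists>z\<in>set ws. subw z (win x 0 (2 * ell (Suc K)))"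
  proof (rule two_block)
    show "\<forall>z\<in>set ws. length z = ell (Suc K)" using ws(1) B_len by blast
    show "ell (Suc K) > 0" using ell_ge1[of "Suc K"] by simp
    show "subw (win x 0 (2 * ell (Suc K))) (concat ws)" using v'(3) ws(2) by simp
  qed simp
  then obtain z where z: "z \<in> B (Suc K)" "subw z (win x 0 (2 * ell (Suc K)))" using ws by blast
  have "subw v z" by (rule B_sub_next[OF v(1) z(1)])
  then have "subw (win y (- int m) (2 * m)) (win x 0 (2 * ell (Suc K)))"
    using v(2) z(2) subw_trans by blast
  from subw_shift[OF this] show ?thesis by simp
qed

lemma XX_minimal: "x \<in> XX \<Longrightarrow> full_shift_top closure_of (orbit x) = XX"
proof
  assume x: "x \<in> XX"
  have "orbit x \<subseteq> XX" unfolding orbit_def using XX_shift_pow[OF x] by blast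
  then show "full_shift_top closure_of (orbit x) \<subseteq> XX" using closure_of_minimal XX_closed by blast
  show "XX \<subseteq> full_shift_top closure_of (orbit x)"
  proof
    fix y assume y: "y \<in> XX"
    show "y \<in> full_shift_top closure_of (orbit x)"
      unfolding in_closure_of
    proof (intro conjI allI impI)
      show "y \<in> topspace full_shift_top" by simp
      fix T assume T: "y \<in> T \<and> openin full_shift_top T"
      then obtain F where F: "finite F" "\<And>z. (\<forall>j\<in>F. z j = y j) \<Longrightarrow> z \<in> T"
        using openin_fs_nbhd by blast
      define m where "m = nat (\<Sum>j\<in>F. \<bar>j\<bar>) + 1"
      have jm: "\<bar>j\<bar> < int m" if "j \<in> F" for j
      proof -
        have "\<bar>j\<bar> \<le> (\<Sum>j\<in>F. \<bar>j\<bar>)" by (rule member_le_sum[OF that _ F(1)]) simp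
        then show ?thesis unfolding m_def by linarith
      qed
      obtain p where p: "\<forall>j<2 * m. x (int p + int j) = y (- int m + int j)"
        using XX_windows[OF x y] by blast
      define z where "z = shift_pow (int p + int m) x"
      have "z \<in> orbit x" unfolding z_def orbit_def by blast
      moreover have "\<forall>j\<in>F. z j = y j"
      proof
        fix j assume "j \<in> F"
        then have a: "\<bar>j\<bar> < int m" by (rule jm)
        define t where "t = nat (j + int m)"
        have t: "t < 2 * m" "int t = j + int m" using a unfolding t_def by auto
        have "x (int p + int t) = y (- int m + int t)" using p t(1) by blast
        then show "z j = y j" unfolding z_def shift_pow_def using t(2) by (simp add: algebra_simps)
      qed
      then have "z \<in> T" using F(2) by blast
      ultimately show "\<exists>z. z \<in> orbit x \<and> z \<in> T" by blast
    qed
  qed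
qed

lemma lang_sub: "language n XX \<subseteq> {w. w \<in> LL \<and> length w = n}"
proof
  fix w assume "w \<in> language n XX"
  then obtain x i where x: "x \<in> XX" "w = map (\<lambda>j. x (i + 1 + int j)) [0..<n]"
    unfolding language_def by blast
  then have "w = win x (i + 1) n" unfolding win_def by simp
  then show "w \<in> {w. w \<in> LL \<and> length w = n}" using x(1) unfolding XX_def by simp
qed

lemma LL_window:
  assumes w: "w \<in> LL" "length w = n"
  shows "w \<in> (\<lambda>(t, V). take n (drop t (concat V))) `
     ({..<ell k} \<times> {V. set V \<subseteq> B k \<and> length V \<le> n div ell k + 2})"
proof -
  let ?l = "ell k" let ?m = "n div ell k + 2"
  obtain K v where v: "K \<ge> k" "v \<in> B K" "subw w v" using LL_up[OF w(1)] by blast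
  obtain ws where ws: "set ws \<subseteq> B k" "v = concat ws" using B_concat[OF v(1,2)] by blast
  have len: "\<forall>z\<in>set ws. length z = ?l" using ws(1) B_len by blast
  obtain P Q where PQ: "concat ws = P @ w @ Q" using v(3) unfolding ws(2) subw_def by blast
  define q where "q = length P div ?l"
  define t where "t = length P mod ?l"
  have lpos: "?l > 0" using ell_ge1[of k] by simp
  have p: "length P = q * ?l + t" unfolding q_def t_def by simp
  have tl: "t < ?l" using lpos unfolding t_def by simp
  have "w = take n (drop (length P) (concat ws))" using PQ w(2) by simp
  also have "\<dots> = take n (drop t (concat (drop q ws)))" unfolding p using drop_concat_const[OF len] by simp
  also have "\<dots> = take n (drop t (concat (take ?m (drop q ws))))"
  proof (rule take_concat_const)
    show "\<forall>z\<in>set (drop q ws). length z = ?l" using len by (meson in_set_dropD)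
    have "n < (n div ?l + 1) * ?l" using lpos by (simp add: dividend_less_div_times)
    then show "t + n \<le> ?m * ?l" using tl by (simp add: algebra_simps)
  qed
  finally have we: "w = take n (drop t (concat (take ?m (drop q ws))))" .
  have "set (take ?m (drop q ws)) \<subseteq> B k" using ws(1) by (meson in_set_dropD in_set_takeD subsetD subsetI)
  moreover have "length (take ?m (drop q ws)) \<le> ?m" by simp
  ultimately have "(t, take ?m (drop q ws)) \<in> {..<?l} \<times> {V. set V \<subseteq> B k \<and> length V \<le> ?m}" using tl by simp
  then show ?thesis using we by (metis (no_types, lifting) case_prod_conv image_eqI)
qed

lemma card_lang: "card (language n XX) \<le> ell k * ((n div ell k + 2 + 1) * card (B k) ^ (n div ell k + 2))"
proof -
  let ?l = "ell k" let ?m = "n div ell k + 2" let ?b = "card (B k)"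
  let ?S = "{..<ell k} \<times> {V. set V \<subseteq> B k \<and> length V \<le> ?m}"
  have finS: "finite ?S" using finite_lists_length_le[OF B_fin] by simp
  have sub: "language n XX \<subseteq> (\<lambda>(t, V). take n (drop t (concat V))) ` ?S"
    using lang_sub LL_window by blast
  have "card (language n XX) \<le> card ((\<lambda>(t, V). take n (drop t (concat V))) ` ?S)"
    by (rule card_mono[OF _ sub]) (use finS in simp)
  also have "\<dots> \<le> card ?S" using finS by (rule card_image_le)
  also have "\<dots> = ?l * (\<Sum>i\<le>?m. ?b ^ i)" by (simp add: card_cartesian_product card_lists_length_le[OF B_fin])
  finally have A: "card (language n XX) \<le> ?l * (\<Sum>i\<le>?m. ?b ^ i)" .
  have b1: "?b \<ge> 1" using B_fin B_ne by (simp add: Suc_le_eq card_gt_0_iff)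
  have "?l * (\<Sum>i\<le>?m. ?b ^ i) \<le> ?l * ((?m + 1) * ?b ^ ?m)" by (rule mult_le_mono2[OF sum_pow_le[OF b1]])
  then show ?thesis using A by linarith
qed

lemma card_B_le: "card (B k) \<le> CARD('a) ^ ell k"
proof -
  have "card (B k) \<le> card {xs. set xs \<subseteq> (UNIV :: 'a set) \<and> length xs = ell k}"
    by (rule card_mono) (use finite_lists_length_eq[of "UNIV :: 'a set" "ell k"] B_len in auto)
  then show ?thesis using card_lists_length_eq[of "UNIV :: 'a set" "ell k"] by simp
qed

lemma card_B_Suc: "card (B (Suc k)) \<le> 2 ^ NN k * card (B k) ^ rr k"
proof -
  let ?N = "NN k" let ?b = "card (B k)" let ?r = "rr k"
  define I where "I = {D. D \<subseteq> {..<?N} \<and> card D \<le> ?r}"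
  define E where "E D = (\<lambda>f. concat (map (\<lambda>j. if j \<in> D then f j else fil k j) [0..<?N])) ` (Pi\<^sub>E D (\<lambda>_. B k))" for D
  have finI: "finite I" unfolding I_def by simp
  have sub: "B (Suc k) \<subseteq> (\<Union>D\<in>I. E D)"
  proof
    fix w assume "w \<in> B (Suc k)"
    then obtain g where w: "w = concat (map g [0..<?N])" and g: "\<forall>j<?N. g j \<in> B k"
      and D: "card {j. j < ?N \<and> g j \<noteq> fil k j} \<le> ?r" unfolding B_Suc by blast
    define D0 where "D0 = {j. j < ?N \<and> g j \<noteq> fil k j}"
    have DI: "D0 \<in> I" unfolding I_def D0_def using D by auto
    have fin: "restrict g D0 \<in> Pi\<^sub>E D0 (\<lambda>_. B k)" using g unfolding D0_def by auto
    have meq: "map (\<lambda>j. if j \<in> D0 then restrict g D0 j else fil k j) [0..<?N] = map g [0..<?N]"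
      by (rule map_cong) (auto simp: D0_def)
    have "w \<in> E D0" unfolding E_def w
      by (intro image_eqI[where x="restrict g D0", OF _ fin]) (simp only: meq)
    then show "w \<in> (\<Union>D\<in>I. E D)" using DI by blast
  qed
  have b1: "?b \<ge> 1" using B_fin B_ne by (simp add: Suc_le_eq card_gt_0_iff)
  have cE: "card (E D) \<le> ?b ^ ?r" if "D \<in> I" for D
  proof -
    have "D \<subseteq> {..<?N}" using that unfolding I_def by simp
    then have fD: "finite D" by (rule finite_subset) simp
    have "card (E D) \<le> card (Pi\<^sub>E D (\<lambda>_. B k))" unfolding E_def
      by (rule card_image_le) (simp add: fD B_fin finite_PiE)
    also have "\<dots> = ?b ^ card D" using fD by (simp add: card_PiE)
    also have "\<dots> \<le> ?b ^ ?r" using that b1 unfolding I_def by (simp add: power_increasing)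
    finally show ?thesis .
  qed
  have "card (B (Suc k)) \<le> card (\<Union>D\<in>I. E D)"
  proof (rule card_mono[OF _ sub])
    have fDI: "finite D" if "D \<in> I" for D
    proof -
      have "D \<subseteq> {..<?N}" using that unfolding I_def by simp
      then show "finite D" by (rule finite_subset) simp
    qed
    have finE: "finite (E D)" if "D \<in> I" for D
      unfolding E_def using fDI[OF that] B_fin by (simp add: finite_PiE)
    show "finite (\<Union>D\<in>I. E D)" by (rule finite_UN_I[OF finI finE])
  qed
  also have "\<dots> \<le> (\<Sum>D\<in>I. card (E D))" using finI by (rule card_UN_le)
  also have "\<dots> \<le> card I * ?b ^ ?r" using sum_bounded_above[of I "\<lambda>D. card (E D)" "?b ^ ?r"] cE by simp
  also have "card I \<le> 2 ^ ?N"
  proof -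
    have "card I \<le> card (Pow {..<?N})" by (rule card_mono) (auto simp: I_def)
    then show ?thesis by (simp add: card_Pow)
  qed
  then have "card I * ?b ^ ?r \<le> 2 ^ ?N * ?b ^ ?r" by (rule mult_le_mono1)
  finally show ?thesis .
qed

lemma h_bound:
  "ln (real (card (B (Suc k)))) / real (ell (Suc k)) \<le> (ln 2 + ln (real CARD('a))) / real (k + 1)"
proof -
  let ?N = "NN k" let ?r = "rr k" let ?b = "card (B k)" let ?l = "ell k"
  define LA where "LA = ln (real CARD('a))"
  have LA0: "LA \<ge> 0" unfolding LA_def by simp
  have ln20: "ln (2::real) \<ge> 0" by simp
  have b1: "real ?b \<ge> 1" using B_fin B_ne by (simp add: Suc_le_eq card_gt_0_iff)
  have B1: "real (card (B (Suc k))) \<ge> 1" using B_fin B_ne by (simp add: Suc_le_eq card_gt_0_iff)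
  have "real (card (B (Suc k))) \<le> real (2 ^ ?N * ?b ^ ?r)"
    using card_B_Suc[of k] by (simp only: of_nat_le_iff)
  then have c1: "real (card (B (Suc k))) \<le> 2 ^ ?N * real ?b ^ ?r" by simp
  have "ln (real (card (B (Suc k)))) \<le> ln (2 ^ ?N * real ?b ^ ?r)"
    using c1 B1 by (intro ln_mono) auto
  also have "\<dots> = real ?N * ln 2 + real ?r * ln (real ?b)"
    using b1 by (simp add: ln_mult ln_realpow)
  finally have c2: "ln (real (card (B (Suc k)))) \<le> real ?N * ln 2 + real ?r * ln (real ?b)" .
  have "real ?b \<le> real (CARD('a) ^ ?l)" using card_B_le[of k] by (simp only: of_nat_le_iff)
  then have "real ?b \<le> real CARD('a) ^ ?l" by simp
  then have "ln (real ?b) \<le> ln (real CARD('a) ^ ?l)" using b1 by (intro ln_mono) auto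
  then have c3: "ln (real ?b) \<le> real ?l * LA" unfolding LA_def by (simp add: ln_realpow)
  define X where "X = real ?N * ln 2 + real ?r * (real ?l * LA)"
  have lnX: "ln (real (card (B (Suc k)))) \<le> X"
    unfolding X_def using c2 c3 mult_left_mono[OF c3, of "real ?r"] by linarith
  have kl: "real (k + 1) \<le> real ?l" using ell_ge[of k] by linarith
  have "real (?r * (k + 1)) \<le> real ?N" using NN_r[of k] by (simp only: of_nat_le_iff)
  then have kr: "real (k + 1) * real ?r \<le> real ?N" by (simp add: algebra_simps)
  have i1: "real (k + 1) * (real ?N * ln 2) \<le> real ?l * (real ?N * ln 2)"
    by (rule mult_right_mono[OF kl]) (simp add: ln20)
  have i2: "(real (k + 1) * real ?r) * (real ?l * LA) \<le> real ?N * (real ?l * LA)"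
    by (rule mult_right_mono[OF kr]) (simp add: LA0)
  have key: "X * real (k + 1) \<le> (ln 2 + LA) * (real ?N * real ?l)"
    using i1 i2 unfolding X_def by (simp add: algebra_simps)
  have Npos: "real ?N * real ?l > 0" using NN_ge[of k] ell_ge1[of k] by simp
  have kpos: "real (k + 1) > 0" by simp
  have "ln (real (card (B (Suc k)))) / real (ell (Suc k)) \<le> X / (real ?N * real ?l)"
    unfolding ell_Suc using lnX Npos by (simp add: divide_right_mono)
  also have "\<dots> \<le> (ln 2 + LA) / real (k + 1)"
    using key Npos kpos by (simp add: divide_le_eq le_divide_eq mult.commute)
  finally show ?thesis unfolding LA_def .
qed

lemma XX_entropy: "zero_entropy XX"
  unfolding zero_entropy_def
proof (rule LIMSEQ_I)
  fix e :: real assume e: "e > 0"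
  define C where "C = ln 2 + ln (real CARD('a))"
  have C0: "C \<ge> 0" unfolding C_def by simp
  obtain K :: nat where K: "6 * C / e < real K" using reals_Archimedean2 by blast
  have CK: "C / real (K + 1) < e / 6"
  proof -
    have "6 * C < e * real K" using K e by (simp add: divide_less_eq mult.commute)
    then have "6 * C < e * real (K + 1)" using e by (simp add: algebra_simps)
    then show ?thesis using e by (simp add: divide_less_eq mult.commute)
  qed
  define k where "k = Suc K"
  define h where "h = ln (real (card (B k))) / real (ell k)"
  have h: "h < e / 6" using h_bound[of K] CK unfolding h_def k_def C_def by linarith
  have lim: "((\<lambda>n. (2 * ln (real n) + ln 4) / real n) \<longlongrightarrow> 0) sequentially" by real_asymp
  then have "eventually (\<lambda>n. dist ((2 * ln (real n) + ln 4) / real n) 0 < e / 2) sequentially"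
    using e by (intro tendstoD) auto
  then obtain n1 where n1: "\<And>n. n \<ge> n1 \<Longrightarrow> dist ((2 * ln (real n) + ln 4) / real n) 0 < e / 2"
    by (auto simp: eventually_sequentially)
  show "\<exists>no. \<forall>n\<ge>no. norm (ln (real (card (language n XX))) / real n - 0) < e"
  proof (intro exI allI impI)
    fix n assume n: "n \<ge> max n1 (ell k)"
    let ?l = "ell k" let ?b = "card (B k)" let ?m = "n div ell k + 2"
    define L where "L = card (language n XX)"
    have l1: "?l \<ge> 1" by (rule ell_ge1)
    have nl: "?l \<le> n" using n by simp
    have n1': "n \<ge> 1" using l1 nl by simp
    have finl: "finite (language n XX)"
      by (rule finite_subset[OF lang_sub]) (use finite_lists_length_eq[of "UNIV::'a set" n] in simp)
    obtain x where x: "x \<in> XX" using XX_ne by blast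
    have "map (\<lambda>j. x (0 + 1 + int j)) [0..<n] \<in> language n XX" unfolding language_def using x by blast
    then have L1: "real L \<ge> 1" unfolding L_def using finl by (simp add: Suc_le_eq card_gt_0_iff) blast
    have b1: "real ?b \<ge> 1" using B_fin B_ne by (simp add: Suc_le_eq card_gt_0_iff)
    have "real L \<le> real (?l * ((?m + 1) * ?b ^ ?m))"
      using card_lang[of n k] unfolding L_def by (simp only: of_nat_le_iff)
    then have cL: "real L \<le> real ?l * (real (?m + 1) * real ?b ^ ?m)" by (simp only: of_nat_mult of_nat_power)
    have "ln (real L) \<le> ln (real ?l * (real (?m + 1) * real ?b ^ ?m))" using cL L1 by (intro ln_mono) auto
    also have "\<dots> = ln (real ?l) + ln (real (?m + 1)) + real ?m * ln (real ?b)"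
      using l1 b1 by (intro ln_prod3) auto
    finally have A: "ln (real L) \<le> ln (real ?l) + ln (real (?m + 1)) + real ?m * ln (real ?b)" .
    have A1: "ln (real ?l) \<le> ln (real n)" using nl l1 by (intro ln_mono) auto
    have "n div ?l \<le> n" by simp
    then have "real (?m + 1) \<le> 4 * real n" using n1' by linarith
    then have "ln (real (?m + 1)) \<le> ln (4 * real n)" by (intro ln_mono) auto
    also have "\<dots> = ln 4 + ln (real n)" using n1' by (simp add: ln_mult)
    finally have A2: "ln (real (?m + 1)) \<le> ln 4 + ln (real n)" .
    have dv: "real (n div ?l) \<le> real n / real ?l" by (rule of_nat_div_le_of_nat)
    have "2 \<le> 2 * (real n / real ?l)" using nl l1 by (simp add: le_divide_eq)
    then have mm: "real ?m \<le> 3 * (real n / real ?l)" using dv by simp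
    have lb0: "ln (real ?b) \<ge> 0" using b1 by simp
    have "real ?m * ln (real ?b) \<le> 3 * (real n / real ?l) * ln (real ?b)"
      by (rule mult_right_mono[OF mm lb0])
    also have "\<dots> = 3 * real n * h" unfolding h_def by simp
    finally have A3: "real ?m * ln (real ?b) \<le> 3 * real n * h" .
    have tot: "ln (real L) \<le> (2 * ln (real n) + ln 4) + 3 * real n * h" using A A1 A2 A3 by linarith
    have np: "real n > 0" using n1' by simp
    have "ln (real L) / real n \<le> ((2 * ln (real n) + ln 4) + 3 * real n * h) / real n"
      using tot np by (simp add: divide_right_mono)
    also have "\<dots> = (2 * ln (real n) + ln 4) / real n + 3 * h" using np by (simp add: add_divide_distrib)
    also have "\<dots> < e / 2 + 3 * (e / 6)"
    proof -
      have d: "dist ((2 * ln (real n) + ln 4) / real n) 0 < e / 2" using n1[of n] n by simp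
      then have "\<bar>(2 * ln (real n) + ln 4) / real n\<bar> < e / 2" by (simp only: dist_real_def diff_zero)
      then have "(2 * ln (real n) + ln 4) / real n < e / 2"
        using abs_ge_self[of "(2 * ln (real n) + ln 4) / real n"] by linarith
      then show ?thesis using h by linarith
    qed
    finally have up: "ln (real L) / real n < e" by simp
    have lo: "ln (real L) / real n \<ge> 0" using L1 np by simp
    show "norm (ln (real (card (language n XX))) / real n - 0) < e" using up lo unfolding L_def by simp
  qed
qed

end

theorem theorem1p4:
  fixes s :: "nat \<Rightarrow> nat"
  assumes "inj s"
    and "banach_density_zero (range s)"
  shows "\<exists>X :: (int \<Rightarrow> 'a::finite) set. minimal_subshift X \<and> zero_entropy X \<and>
           (\<forall>u :: nat \<Rightarrow> 'a. \<exists>x\<in>X. \<forall>n. x (int (s n)) = u n)"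
proof -
  interpret C: cstr s "undefined :: 'a" using assms by unfold_locales
  have "minimal_subshift C.XX"
    unfolding minimal_subshift_def using C.XX_subshift C.XX_ne C.XX_minimal by blast
  moreover have "zero_entropy C.XX" by (rule C.XX_entropy)
  moreover have "\<forall>u :: nat \<Rightarrow> 'a. \<exists>x\<in>C.XX. \<forall>n. x (int (s n)) = u n"
    using C.xu_in C.xu_val by blast
  ultimately show ?thesis by blast
qed

end
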